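(* Let $q$ be a prime power and let $n,k$ be integers with $5\le k\le \frac{n-2}{2}$ and $n\le q$. Let $\alpha_1,\dots,\alpha_n\in\mathbb{F}_q$ be pairwise distinct, and let $C_{k-1,k-2}$ be the linear code generated by the $k\times n$ matrix whose rows are $(\alpha_1^{e},\dots,\alpha_n^{e})$ for $e=0,1,\dots,k-3,k,k+1$. If $C_{k-1,k-2}$ is MDS, then $C_{k-1,k-2}$ is a non-GRS MDS code.
   Context: Convention: $0^0=1$. A linear code is MDS if its parameters $[n,k,d]$ satisfy $d=n-k+1$. For pairwise distinct $a_1,\dots,a_n\in\mathbb{F}_q$ and $w\in(\mathbb{F}_q^* )^n$, the generalized Reed–Solomon code is $GRS(n,k,\{a_i\},w)=\{(w_1f(a_1),\dots,w_nf(a_n)) : f\in\mathbb{F}_q[x],\ \deg f\le k-1\}$. Two codes are (monomially) equivalent if one is obtained from the other by a permutation of coordinates and multiplication of coordinates by nonzero scalars. A non-GRS MDS code is an MDS code not equivalent to any GRS code. *)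

theory Defs
  imports "HOL-Computational_Algebra.Polynomial" "HOL-Library.Cardinality" "HOL-Combinatorics.Permutations"
begin

text \<open>Words of length n over a field are represented as functions nat => 'a
  that vanish outside {..<n}. A code of length n is a set of such words.\<close>

definition restrict_len :: "nat \<Rightarrow> (nat \<Rightarrow> 'a::zero) \<Rightarrow> nat \<Rightarrow> 'a" where
  "restrict_len n x = (\<lambda>i. if i < n then x i else 0)"

definition words :: "nat \<Rightarrow> (nat \<Rightarrow> 'a::zero) set" where
  "words n = {x. \<forall>i\<ge>n. x i = 0}"

definition gen_code :: "nat \<Rightarrow> nat \<Rightarrow> (nat \<Rightarrow> nat \<Rightarrow> 'a::field) \<Rightarrow> (nat \<Rightarrow> 'a) set" where
  "gen_code n m G = {restrict_len n (\<lambda>i. \<Sum>j<m. c j * G j i) | c. True}"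

definition linear_code :: "nat \<Rightarrow> (nat \<Rightarrow> 'a::field) set \<Rightarrow> bool" where
  "linear_code n C \<longleftrightarrow> C \<subseteq> words n \<and> (\<lambda>_. 0) \<in> C \<and>
     (\<forall>x\<in>C. \<forall>y\<in>C. (\<lambda>i. x i + y i) \<in> C) \<and> (\<forall>a. \<forall>x\<in>C. (\<lambda>i. a * x i) \<in> C)"

definition code_dim :: "(nat \<Rightarrow> 'a::{field,finite}) set \<Rightarrow> nat" where
  "code_dim C = (THE k. card C = CARD('a) ^ k)"

definition hamming_dist :: "nat \<Rightarrow> (nat \<Rightarrow> 'a) \<Rightarrow> (nat \<Rightarrow> 'a) \<Rightarrow> nat" where
  "hamming_dist n x y = card {i. i < n \<and> x i \<noteq> y i}"

definition min_dist :: "nat \<Rightarrow> (nat \<Rightarrow> 'a) set \<Rightarrow> nat" where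
  "min_dist n C = Min {hamming_dist n x y | x y. x \<in> C \<and> y \<in> C \<and> x \<noteq> y}"

definition is_MDS :: "nat \<Rightarrow> (nat \<Rightarrow> 'a::{field,finite}) set \<Rightarrow> bool" where
  "is_MDS n C \<longleftrightarrow> linear_code n C \<and> min_dist n C = n - code_dim C + 1"

definition GRS :: "nat \<Rightarrow> nat \<Rightarrow> (nat \<Rightarrow> 'a::field) \<Rightarrow> (nat \<Rightarrow> 'a) \<Rightarrow> (nat \<Rightarrow> 'a) set" where
  "GRS n k a w = {restrict_len n (\<lambda>i. w i * poly f (a i)) | f. degree f \<le> k - 1}"

definition code_equiv :: "nat \<Rightarrow> (nat \<Rightarrow> 'a::field) set \<Rightarrow> (nat \<Rightarrow> 'a) set \<Rightarrow> bool" where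
  "code_equiv n C D \<longleftrightarrow> (\<exists>\<sigma> s. \<sigma> permutes {..<n} \<and> (\<forall>i<n. s i \<noteq> 0) \<and>
     D = (\<lambda>c. restrict_len n (\<lambda>i. s i * c (\<sigma> i))) ` C)"

definition is_GRS_equiv :: "nat \<Rightarrow> (nat \<Rightarrow> 'a::field) set \<Rightarrow> bool" where
  "is_GRS_equiv n C \<longleftrightarrow> (\<exists>k a w. inj_on a {..<n} \<and> (\<forall>i<n. w i \<noteq> 0) \<and>
     code_equiv n C (GRS n k a w))"

definition non_GRS_MDS :: "nat \<Rightarrow> (nat \<Rightarrow> 'a::{field,finite}) set \<Rightarrow> bool" where
  "non_GRS_MDS n C \<longleftrightarrow> is_MDS n C \<and> \<not> is_GRS_equiv n C"

definition expo :: "nat \<Rightarrow> nat \<Rightarrow> nat" where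
  "expo k j = (if j \<le> k - 3 then j else if j = k - 2 then k else k + 1)"

definition C_code :: "nat \<Rightarrow> nat \<Rightarrow> (nat \<Rightarrow> 'a::field) \<Rightarrow> (nat \<Rightarrow> 'a) set" where
  "C_code n k \<alpha> = gen_code n k (\<lambda>j i. \<alpha> i ^ expo k j)"

end

theory Submission
  imports Defs "HOL-Library.FuncSet"
begin

lemma vanish_zero:
  fixes p :: "'a::field poly"
  assumes "inj_on \<alpha> {..<n}" "\<forall>i<n. poly p (\<alpha> i) = 0" "degree p < n"
  shows "p = 0"
proof (rule ccontr)
  assume "p \<noteq> 0"
  have "\<alpha> ` {..<n} \<subseteq> {x. poly p x = 0}" using assms(2) by auto
  hence "card (\<alpha> ` {..<n}) \<le> card {x. poly p x = 0}"
    using poly_roots_finite[OF \<open>p \<noteq> 0\<close>] by (intro card_mono) auto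
  also have "\<dots> \<le> degree p" using card_poly_roots_bound[OF \<open>p \<noteq> 0\<close>] .
  finally show False using assms(1,3) by (simp add: card_image)
qed

definition psum :: "nat set \<Rightarrow> (nat \<Rightarrow> 'a::comm_monoid_add) \<Rightarrow> 'a poly" where
  "psum E c = (\<Sum>e\<in>E. monom (c e) e)"

lemma coeff_psum: "finite E \<Longrightarrow> coeff (psum E c) i = (if i \<in> E then c i else 0)"
  unfolding psum_def by (simp add: coeff_sum coeff_monom if_distrib sum.delta cong: if_cong)

lemma poly_psum: "finite E \<Longrightarrow> poly (psum E c) (x::'a::field) = (\<Sum>e\<in>E. c e * x ^ e)"
  unfolding psum_def by (simp add: poly_sum poly_monom)

lemma degree_psum: "finite E \<Longrightarrow> (\<forall>e\<in>E. e < N) \<Longrightarrow> N > 0 \<Longrightarrow> degree (psum E c) < N"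
proof -
  assume a: "finite E" "\<forall>e\<in>E. e < N" "N > 0"
  have "degree (psum E c) \<le> N - 1"
    by (rule degree_le) (use a in \<open>auto simp: coeff_psum\<close>)
  thus ?thesis using a by linarith
qed

lemma psum_inj:
  fixes \<alpha> :: "nat \<Rightarrow> 'a::field"
  assumes "inj_on \<alpha> {..<n}" "finite E" "\<forall>e\<in>E. e < n"
    and "\<forall>i<n. (\<Sum>e\<in>E. c e * \<alpha> i ^ e) = (\<Sum>e\<in>E. d e * \<alpha> i ^ e)"
    and "e \<in> E"
  shows "c e = d e"
proof -
  have "n > 0" using assms(3,5) by auto
  let ?p = "psum E c - psum E d"
  have "degree ?p < n"
    using degree_diff_le_max[of "psum E c" "psum E d"] degree_psum[OF assms(2,3) \<open>n>0\<close>, of c]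
      degree_psum[OF assms(2,3) \<open>n>0\<close>, of d] by linarith
  moreover have "\<forall>i<n. poly ?p (\<alpha> i) = 0" using assms(4) by (simp add: poly_psum[OF assms(2)])
  ultimately have "?p = 0" using vanish_zero assms(1) by blast
  hence "coeff ?p e = 0" by simp
  thus ?thesis using assms(2,5) by (simp add: coeff_psum)
qed

inductive_set sqc :: "(nat \<Rightarrow> 'a::field) set \<Rightarrow> (nat \<Rightarrow> 'a) set" for C where
  sq_zero: "(\<lambda>_. 0) \<in> sqc C"
| sq_prod: "x \<in> C \<Longrightarrow> y \<in> C \<Longrightarrow> (\<lambda>i. x i * y i) \<in> sqc C"
| sq_add: "u \<in> sqc C \<Longrightarrow> v \<in> sqc C \<Longrightarrow> (\<lambda>i. u i + v i) \<in> sqc C"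

lemma sq_sum: "finite E \<Longrightarrow> (\<forall>e\<in>E. f e \<in> sqc C) \<Longrightarrow> (\<lambda>i. \<Sum>e\<in>E. f e i) \<in> sqc C"
proof (induction E rule: finite_induct)
  case empty then show ?case by (simp add: sq_zero)
next
  case (insert x F)
  then show ?case using sq_add[of "f x" C "\<lambda>i. \<Sum>e\<in>F. f e i"] by simp
qed

lemma sq_words: assumes "C \<subseteq> words n" "z \<in> sqc C" shows "z \<in> words n"
  using assms(2) by (induction z rule: sqc.induct) (use assms(1) in \<open>auto simp: words_def\<close>)

lemma restrict_len_words: "restrict_len n f \<in> words n"
  by (simp add: restrict_len_def words_def)

lemma sq_equiv:
  fixes C :: "(nat \<Rightarrow> 'a::field) set"
  assumes "C \<subseteq> words n" "\<sigma> permutes {..<n}" "\<forall>i<n. s i \<noteq> 0"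
    and "D = (\<lambda>c. restrict_len n (\<lambda>i. s i * c (\<sigma> i))) ` C" and "finite (sqc D)"
  shows "card (sqc C) \<le> card (sqc D) \<and> finite (sqc C)"
proof -
  define \<psi> where "\<psi> z = restrict_len n (\<lambda>i. s i * s i * z (\<sigma> i))" for z :: "nat \<Rightarrow> 'a"
  have sub: "\<psi> z \<in> sqc D" if "z \<in> sqc C" for z
    using that
  proof (induction z rule: sqc.induct)
    case sq_zero
    then show ?case using sqc.sq_zero by (simp add: \<psi>_def restrict_len_def[abs_def])
  next
    case (sq_prod x y)
    have "\<psi> (\<lambda>i. x i * y i) = (\<lambda>i. restrict_len n (\<lambda>i. s i * x (\<sigma> i)) i * restrict_len n (\<lambda>i. s i * y (\<sigma> i)) i)"
      by (auto simp: \<psi>_def restrict_len_def algebra_simps)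
    moreover have "restrict_len n (\<lambda>i. s i * x (\<sigma> i)) \<in> D" "restrict_len n (\<lambda>i. s i * y (\<sigma> i)) \<in> D"
      using assms(4) sq_prod.hyps by blast+
    moreover note sqc.sq_prod[OF calculation(2,3)]
    ultimately show ?case by simp
  next
    case (sq_add u v)
    have "\<psi> (\<lambda>i. u i + v i) = (\<lambda>i. \<psi> u i + \<psi> v i)"
      by (auto simp: \<psi>_def restrict_len_def algebra_simps)
    then show ?case using sqc.sq_add[OF sq_add.IH] by (simp only:)
  qed
  have inj: "inj_on \<psi> (sqc C)"
  proof (rule inj_onI)
    fix z z' assume z: "z \<in> sqc C" "z' \<in> sqc C" "\<psi> z = \<psi> z'"
    show "z = z'"
    proof
      fix j
      show "z j = z' j"
      proof (cases "j < n")
        case True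
        then have "j \<in> \<sigma> ` {..<n}" using permutes_image[OF assms(2)] by simp
        then obtain i where i0: "j = \<sigma> i" "i \<in> {..<n}" by (rule imageE)
        then have i: "i \<in> {..<n}" "\<sigma> i = j" by simp_all
        have "\<psi> z i = \<psi> z' i" using fun_cong[OF z(3), of i] .
        then have "s i * s i * z j = s i * s i * z' j" using i by (simp add: \<psi>_def restrict_len_def)
        then show ?thesis using assms(3) i by simp
      next
        case False
        then show ?thesis using sq_words[OF assms(1) z(1)] sq_words[OF assms(1) z(2)]
          by (simp add: words_def)
      qed
    qed
  qed
  have "\<psi> ` sqc C \<subseteq> sqc D" using sub by auto
  then show ?thesis using card_inj_on_le[OF inj _ assms(5)] inj_on_finite[OF inj _ assms(5)] by blast
qed

lemma GRS_sq:
  assumes "z \<in> sqc (GRS n k a w)"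
  shows "\<exists>h. degree h \<le> 2*(k-1) \<and> z = restrict_len n (\<lambda>i. w i * w i * poly h (a i))"
  using assms
proof (induction z rule: sqc.induct)
  case sq_zero
  then show ?case by (intro exI[of _ 0]) (simp add: restrict_len_def[abs_def])
next
  case (sq_prod x y)
  then obtain f g where fg: "degree f \<le> k - 1" "degree g \<le> k - 1"
    "x = restrict_len n (\<lambda>i. w i * poly f (a i))" "y = restrict_len n (\<lambda>i. w i * poly g (a i))"
    by (auto simp: GRS_def)
  have "degree (f * g) \<le> 2*(k-1)" using degree_mult_le[of f g] fg by linarith
  moreover have "(\<lambda>i. x i * y i) = restrict_len n (\<lambda>i. w i * w i * poly (f*g) (a i))"
    using fg by (auto simp: restrict_len_def algebra_simps)
  ultimately show ?case by blast
next
  case (sq_add u v)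
  then obtain f g where fg: "degree f \<le> 2*(k-1)" "degree g \<le> 2*(k-1)"
    "u = restrict_len n (\<lambda>i. w i * w i * poly f (a i))" "v = restrict_len n (\<lambda>i. w i * w i * poly g (a i))"
    by blast
  have "degree (f + g) \<le> 2*(k-1)" using degree_add_le fg by blast
  moreover have "(\<lambda>i. u i + v i) = restrict_len n (\<lambda>i. w i * w i * poly (f+g) (a i))"
    using fg by (auto simp: restrict_len_def algebra_simps)
  ultimately show ?case by blast
qed

lemma card_PiE_UNIV: "card (PiE {..<m} (\<lambda>_. UNIV :: 'a::finite set)) = CARD('a) ^ m"
  by (simp add: card_PiE)

lemma card_polys:
  "finite {h :: 'a::{field,finite} poly. degree h < N} \<and> card {h :: 'a poly. degree h < N} \<le> CARD('a) ^ N"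
proof -
  let ?P = "{h :: 'a poly. degree h < N}"
  let ?f = "\<lambda>h :: 'a poly. restrict (coeff h) {..<N}"
  have inj: "inj_on ?f ?P"
  proof (rule inj_onI)
    fix h g assume hg: "h \<in> ?P" "g \<in> ?P" "?f h = ?f g"
    show "h = g"
    proof (rule poly_eqI)
      fix i show "coeff h i = coeff g i"
      proof (cases "i < N")
        case True then show ?thesis using fun_cong[OF hg(3), of i] by simp
      next
        case False then show ?thesis using hg(1,2) by (simp add: coeff_eq_0)
      qed
    qed
  qed
  have sub: "?f ` ?P \<subseteq> PiE {..<N} (\<lambda>_. UNIV)" by (intro image_subsetI, subst restrict_PiE_iff) simp
  have fin: "finite (PiE {..<N} (\<lambda>_. UNIV :: 'a set))" by (simp add: finite_PiE)
  have "card (PiE {..<N} (\<lambda>_. UNIV :: 'a set)) = CARD('a)^N" by (rule card_PiE_UNIV)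
  then show ?thesis using card_inj_on_le[OF inj sub fin] inj_on_finite[OF inj sub fin]
    by simp
qed

lemma card_sq_GRS:
  fixes a w :: "nat \<Rightarrow> 'a::{field,finite}"
  shows "finite (sqc (GRS n k a w)) \<and> card (sqc (GRS n k a w)) \<le> CARD('a) ^ (2*(k-1)+1)"
proof -
  let ?P = "{h :: 'a poly. degree h < 2*(k-1)+1}"
  let ?G = "\<lambda>h. restrict_len n (\<lambda>i. w i * w i * poly h (a i))"
  have "sqc (GRS n k a w) \<subseteq> ?G ` ?P"
    using GRS_sq by fastforce
  moreover have "finite (?G ` ?P)" "card (?G ` ?P) \<le> CARD('a) ^ (2*(k-1)+1)"
    using card_polys[of "2*(k-1)+1", where 'a='a] card_image_le[of ?P ?G] by auto
  ultimately show ?thesis using card_mono[of "?G ` ?P" "sqc (GRS n k a w)"] finite_subset[of "sqc (GRS n k a w)" "?G ` ?P"] by linarith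
qed


lemma card_GRS_ge:
  fixes a w :: "nat \<Rightarrow> 'a::{field,finite}"
  assumes "inj_on a {..<n}" "\<forall>i<n. w i \<noteq> 0" "finite (GRS n k a w)" "0 < n"
  shows "CARD('a) ^ (min (max k 1) n) \<le> card (GRS n k a w)"
proof -
  define m where "m = min (max k 1) n"
  have m: "0 < m" "m \<le> n" "m - 1 \<le> k - 1" using assms(4) by (auto simp: m_def)
  define F where "F c = restrict_len n (\<lambda>i. w i * poly (psum {..<m} c) (a i))" for c :: "nat \<Rightarrow> 'a"
  have sub: "F ` PiE {..<m} (\<lambda>_. UNIV) \<subseteq> GRS n k a w"
  proof
    fix z assume "z \<in> F ` PiE {..<m} (\<lambda>_. UNIV)"
    then obtain c where z: "z = F c" by blast
    have "degree (psum {..<m} c) < m" using degree_psum[of "{..<m}" m c] m by auto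
    then have "degree (psum {..<m} c) \<le> k - 1" using m by linarith
    then show "z \<in> GRS n k a w" unfolding z F_def GRS_def by blast
  qed
  have inj: "inj_on F (PiE {..<m} (\<lambda>_. UNIV))"
  proof (rule inj_onI)
    fix c d assume cd: "c \<in> PiE {..<m} (\<lambda>_. UNIV)" "d \<in> PiE {..<m} (\<lambda>_. UNIV)" "F c = F d"
    have eq: "\<forall>i<n. (\<Sum>e\<in>{..<m}. c e * a i ^ e) = (\<Sum>e\<in>{..<m}. d e * a i ^ e)"
    proof (intro allI impI)
      fix i assume "i < n"
      have "F c i = F d i" using cd(3) by simp
      then have "w i * poly (psum {..<m} c) (a i) = w i * poly (psum {..<m} d) (a i)"
        using \<open>i < n\<close> by (simp add: F_def restrict_len_def)
      then show "(\<Sum>e\<in>{..<m}. c e * a i ^ e) = (\<Sum>e\<in>{..<m}. d e * a i ^ e)"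
        using assms(2) \<open>i < n\<close> by (simp add: poly_psum)
    qed
    show "c = d"
    proof (rule PiE_ext[OF cd(1,2)])
      fix e assume "e \<in> {..<m}"
      then show "c e = d e" using psum_inj[OF assms(1), of "{..<m}" c d e] eq m by auto
    qed
  qed
  have "card (PiE {..<m} (\<lambda>_. UNIV :: 'a set)) \<le> card (GRS n k a w)"
    using card_inj_on_le[OF inj sub assms(3)] .
  then show ?thesis using card_PiE_UNIV[of m, where 'a='a] by (simp add: m_def)
qed

lemma card_C_le:
  fixes G :: "nat \<Rightarrow> nat \<Rightarrow> 'a::{field,finite}"
  shows "finite (gen_code n k G) \<and> card (gen_code n k G) \<le> CARD('a) ^ k"
proof -
  define F where "F c = restrict_len n (\<lambda>i. \<Sum>j<k. c j * G j i)" for c :: "nat \<Rightarrow> 'a"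
  have sub: "gen_code n k G \<subseteq> F ` PiE {..<k} (\<lambda>_. UNIV)"
  proof
    fix z assume "z \<in> gen_code n k G"
    then obtain c where z: "z = F c" by (auto simp: gen_code_def F_def)
    have "F c = F (restrict c {..<k})" unfolding F_def by simp
    moreover have "restrict c {..<k} \<in> PiE {..<k} (\<lambda>_. UNIV)" by simp
    ultimately show "z \<in> F ` PiE {..<k} (\<lambda>_. UNIV)" using z by blast
  qed
  have fin: "finite (F ` PiE {..<k} (\<lambda>_. UNIV :: 'a set))" by (simp add: finite_PiE)
  have cl: "card (F ` PiE {..<k} (\<lambda>_. UNIV :: 'a set)) \<le> CARD('a) ^ k"
    using card_image_le[of "PiE {..<k} (\<lambda>_. UNIV :: 'a set)" F] card_PiE_UNIV[of k, where 'a='a]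
    by (simp add: finite_PiE)
  have "finite (gen_code n k G)" by (rule finite_subset[OF sub fin])
  moreover have "card (gen_code n k G) \<le> card (F ` PiE {..<k} (\<lambda>_. UNIV))" by (rule card_mono[OF fin sub])
  ultimately show ?thesis using cl by linarith
qed

lemma expo_decomp:
  assumes "5 \<le> k" "e \<le> 2*k" "e \<noteq> 2*k - 1"
  shows "\<exists>j1<k. \<exists>j2<k. expo k j1 + expo k j2 = e"
proof -
  have ex: "expo k j = j" if "j \<le> k - 3" for j using that by (simp add: expo_def)
  have e2: "expo k (k-2) = k" using assms(1) by (simp add: expo_def)
  have "\<not> (k-1 \<le> k-3)" "k-1 \<noteq> k-2" using assms(1) by arith+
  then have e1: "expo k (k-1) = k+1" by (simp add: expo_def)
  consider "e \<le> 2*k - 6" | "k \<le> e \<and> e \<le> 2*k-3" | "e = 2*k-2" | "e = 2*k" using assms by linarith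
  then show ?thesis
  proof cases
    case 1
    define j1 where "j1 = min e (k-3)"
    have a: "j1 \<le> k - 3" "e - j1 \<le> k - 3" "j1 + (e - j1) = e" using 1 unfolding j1_def by arith+
    have eq: "expo k j1 + expo k (e - j1) = e" using ex[OF a(1)] ex[OF a(2)] a(3) by simp
    have l: "j1 < k" "e - j1 < k" using a assms(1) by arith+
    show ?thesis by (rule exI[of _ j1], rule conjI[OF l(1)], rule exI[of _ "e - j1"], rule conjI[OF l(2) eq])
  next
    case 2
    have a: "e - k \<le> k - 3" "k + (e - k) = e" using 2 by arith+
    have eq: "expo k (k-2) + expo k (e-k) = e" using e2 ex[OF a(1)] a(2) by simp
    have l: "k-2 < k" "e-k < k" using assms(1) 2 by arith+
    show ?thesis by (rule exI[of _ "k-2"], rule conjI[OF l(1)], rule exI[of _ "e-k"], rule conjI[OF l(2) eq])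
  next
    case 3
    have eq: "expo k (k-1) + expo k (k-3) = e" using e1 ex[of "k-3"] 3 assms(1) by simp
    have l: "k-1 < k" "k-3 < k" using assms(1) by arith+
    show ?thesis by (rule exI[of _ "k-1"], rule conjI[OF l(1)], rule exI[of _ "k-3"], rule conjI[OF l(2) eq])
  next
    case 4
    have eq: "expo k (k-2) + expo k (k-2) = e" using e2 4 by simp
    have l: "k-2 < k" using assms(1) by arith
    show ?thesis by (rule exI[of _ "k-2"], rule conjI[OF l], rule exI[of _ "k-2"], rule conjI[OF l eq])
  qed
qed


lemma C_mem:
  assumes "j < k"
  shows "restrict_len n (\<lambda>i. t * \<alpha> i ^ expo k j) \<in> C_code n k \<alpha>"
proof -
  have "(\<Sum>j'<k. (if j' = j then t else 0) * \<alpha> i ^ expo k j') = t * \<alpha> i ^ expo k j" for i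
  proof -
    have "(\<Sum>j'<k. (if j' = j then t else 0) * \<alpha> i ^ expo k j') = (\<Sum>j'<k. if j' = j then t * \<alpha> i ^ expo k j' else 0)"
      by (rule sum.cong) auto
    also have "\<dots> = t * \<alpha> i ^ expo k j" using assms by (simp add: sum.delta)
    finally show ?thesis .
  qed
  then have "(\<lambda>i. t * \<alpha> i ^ expo k j) = (\<lambda>i. \<Sum>j'<k. (if j' = j then t else 0) * \<alpha> i ^ expo k j')"
    by simp
  then show ?thesis unfolding C_code_def gen_code_def by auto
qed

lemma sqC_ge:
  fixes \<alpha> :: "nat \<Rightarrow> 'a::{field,finite}"
  assumes "5 \<le> k" "2*k < n" "inj_on \<alpha> {..<n}" "finite (sqc (C_code n k \<alpha>))"
  shows "CARD('a) ^ (2*k) \<le> card (sqc (C_code n k \<alpha>))"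
proof -
  define E where "E = insert (2*k) {..<2*k-1}"
  have finE: "finite E" by (simp add: E_def)
  have cardE: "card E = 2*k" using assms(1) by (simp add: E_def)
  have Elt: "\<forall>e\<in>E. e < n" using assms(2) by (auto simp: E_def)
  define H where "H c = restrict_len n (\<lambda>i. \<Sum>e\<in>E. c e * \<alpha> i ^ e)" for c :: "nat \<Rightarrow> 'a"
  have mono: "restrict_len n (\<lambda>i. t * \<alpha> i ^ e) \<in> sqc (C_code n k \<alpha>)" if "e \<in> E" for e t
  proof -
    have "e \<le> 2*k" "e \<noteq> 2*k - 1" using that assms(1) by (auto simp: E_def)
    then obtain j1 j2 where j: "j1 < k" "j2 < k" "expo k j1 + expo k j2 = e"
      using expo_decomp[OF assms(1)] by blast
    have "restrict_len n (\<lambda>i. t * \<alpha> i ^ e) =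
      (\<lambda>i. restrict_len n (\<lambda>i. t * \<alpha> i ^ expo k j1) i * restrict_len n (\<lambda>i. 1 * \<alpha> i ^ expo k j2) i)"
    proof (rule ext)
      fix i
      show "restrict_len n (\<lambda>i. t * \<alpha> i ^ e) i =
        restrict_len n (\<lambda>i. t * \<alpha> i ^ expo k j1) i * restrict_len n (\<lambda>i. 1 * \<alpha> i ^ expo k j2) i"
        unfolding restrict_len_def j(3)[symmetric] power_add by simp
    qed
    moreover have "(\<lambda>i. restrict_len n (\<lambda>i. t * \<alpha> i ^ expo k j1) i * restrict_len n (\<lambda>i. 1 * \<alpha> i ^ expo k j2) i) \<in> sqc (C_code n k \<alpha>)"
      by (rule sq_prod[OF C_mem[OF j(1)] C_mem[OF j(2)]])
    ultimately show ?thesis by (simp only:)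
  qed
  have sub: "H ` PiE E (\<lambda>_. UNIV) \<subseteq> sqc (C_code n k \<alpha>)"
  proof
    fix z assume "z \<in> H ` PiE E (\<lambda>_. UNIV)"
    then obtain c where z: "z = H c" by blast
    have "H c = (\<lambda>i. \<Sum>e\<in>E. restrict_len n (\<lambda>i. c e * \<alpha> i ^ e) i)"
      by (auto simp: H_def restrict_len_def)
    moreover have "\<forall>e\<in>E. restrict_len n (\<lambda>i. c e * \<alpha> i ^ e) \<in> sqc (C_code n k \<alpha>)"
      using mono by blast
    then have "(\<lambda>i. \<Sum>e\<in>E. restrict_len n (\<lambda>i. c e * \<alpha> i ^ e) i) \<in> sqc (C_code n k \<alpha>)"
      by (rule sq_sum[OF finE])
    ultimately show "z \<in> sqc (C_code n k \<alpha>)" using z by (simp only:)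
  qed
  have inj: "inj_on H (PiE E (\<lambda>_. UNIV))"
  proof (rule inj_onI)
    fix c d assume cd: "c \<in> PiE E (\<lambda>_. UNIV)" "d \<in> PiE E (\<lambda>_. UNIV)" "H c = H d"
    have eq: "\<forall>i<n. (\<Sum>e\<in>E. c e * \<alpha> i ^ e) = (\<Sum>e\<in>E. d e * \<alpha> i ^ e)"
    proof (intro allI impI)
      fix i assume "i < n"
      have "H c i = H d i" using cd(3) by simp
      then show "(\<Sum>e\<in>E. c e * \<alpha> i ^ e) = (\<Sum>e\<in>E. d e * \<alpha> i ^ e)"
        using \<open>i < n\<close> by (simp add: H_def restrict_len_def)
    qed
    show "c = d"
    proof (rule PiE_ext[OF cd(1,2)])
      fix e assume "e \<in> E"
      then show "c e = d e" using psum_inj[OF assms(3) finE Elt eq] by blast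
    qed
  qed
  have "card (PiE E (\<lambda>_. UNIV :: 'a set)) = CARD('a) ^ (2*k)"
    using cardE finE by (simp add: card_PiE)
  then show ?thesis using card_inj_on_le[OF inj sub assms(4)] by simp
qed

theorem theorem3p7:
  fixes \<alpha> :: "nat \<Rightarrow> 'a::{field,finite}" and n k :: nat
  assumes "5 \<le> k" and "2 * k \<le> n - 2" and "n \<le> CARD('a)"
    and "inj_on \<alpha> {..<n}"
    and "is_MDS n (C_code n k \<alpha>)"
  shows "non_GRS_MDS n (C_code n k \<alpha>)"
proof -
  let ?C = "C_code n k \<alpha>"
  have kn: "2*k < n" using assms(1,2) by linarith
  have q2: "2 \<le> CARD('a)"
  proof -
    have "{0::'a, 1} \<subseteq> UNIV" by simp
    then have "card {0::'a, 1} \<le> CARD('a)" by (intro card_mono) auto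
    then show ?thesis by simp
  qed
  have q1: "1 < CARD('a)" using q2 by linarith
  have Cw: "?C \<subseteq> words n" by (auto simp: C_code_def gen_code_def restrict_len_words)
  have Cfin: "finite ?C" "card ?C \<le> CARD('a) ^ k" using card_C_le unfolding C_code_def by blast+
  have "\<not> is_GRS_equiv n ?C"
  proof
    assume "is_GRS_equiv n ?C"
    then obtain k' a w \<sigma> s where aw: "inj_on a {..<n}" "\<forall>i<n. w i \<noteq> (0::'a)"
      and \<sigma>: "\<sigma> permutes {..<n}" "\<forall>i<n. s i \<noteq> 0"
      and D: "GRS n k' a w = (\<lambda>c. restrict_len n (\<lambda>i. s i * c (\<sigma> i))) ` ?C"
      unfolding is_GRS_equiv_def code_equiv_def by blast
    have injphi: "inj_on (\<lambda>c. restrict_len n (\<lambda>i. s i * c (\<sigma> i))) ?C"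
    proof (rule inj_onI)
      fix z z' assume z: "z \<in> ?C" "z' \<in> ?C"
        "restrict_len n (\<lambda>i. s i * z (\<sigma> i)) = restrict_len n (\<lambda>i. s i * z' (\<sigma> i))"
      show "z = z'"
      proof
        fix j
        show "z j = z' j"
        proof (cases "j < n")
          case True
          then have "j \<in> \<sigma> ` {..<n}" using permutes_image[OF \<sigma>(1)] by simp
          then obtain i where i0: "j = \<sigma> i" "i \<in> {..<n}" by (rule imageE)
          then have i: "i \<in> {..<n}" "\<sigma> i = j" by simp_all
          have "restrict_len n (\<lambda>i. s i * z (\<sigma> i)) i = restrict_len n (\<lambda>i. s i * z' (\<sigma> i)) i"
            using fun_cong[OF z(3), of i] .
          then have "s i * z j = s i * z' j" using i by (simp add: restrict_len_def)
          then show ?thesis using \<sigma>(2) i by simp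
        next
          case False
          have "z \<in> words n" "z' \<in> words n" using Cw z(1,2) by (blast, blast)
          then show ?thesis using False by (simp add: words_def)
        qed
      qed
    qed
    have cardD: "card (GRS n k' a w) = card ?C" "finite (GRS n k' a w)"
      using D card_image[OF injphi] finite_imageI[OF Cfin(1)] by simp_all
    have "CARD('a) ^ (min (max k' 1) n) \<le> CARD('a) ^ k"
    proof -
      have "0 < n" using kn by linarith
      then have "CARD('a) ^ (min (max k' 1) n) \<le> card (GRS n k' a w)" by (rule card_GRS_ge[OF aw cardD(2)])
      then show ?thesis using cardD(1) Cfin(2) by linarith
    qed
    then have "min (max k' 1) n \<le> k" by (rule power_le_imp_le_exp[OF q1])
    then have k'k: "k' \<le> k" using kn by linarith
    have sqD: "finite (sqc (GRS n k' a w))" "card (sqc (GRS n k' a w)) \<le> CARD('a) ^ (2*(k'-1)+1)"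
      using card_sq_GRS by blast+
    have sqC: "card (sqc ?C) \<le> card (sqc (GRS n k' a w))" "finite (sqc ?C)"
      using sq_equiv[OF Cw \<sigma> D sqD(1)] by blast+
    have "CARD('a) ^ (2*k) \<le> CARD('a) ^ (2*(k'-1)+1)"
      using sqC_ge[OF assms(1) kn assms(4) sqC(2)] sqC(1) sqD(2) by linarith
    then have "2*k \<le> 2*(k'-1)+1" by (rule power_le_imp_le_exp[OF q1])
    then show False using k'k assms(1) by linarith
  qed
  then show ?thesis using assms(5) by (simp add: non_GRS_MDS_def)
qed

end
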